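(* Let $K$ be a field, $n\ge1$, $R=K[x_1,\ldots,x_{2n+1}]$, and let $C_{2n+1}$ be the cycle graph with vertices $x_1,\ldots,x_{2n+1}$ and edges $\{x_i,x_{i+1}\}$ for $i=1,\ldots,2n$ and $\{x_{2n+1},x_1\}$. Then the edge ideal $I(C_{2n+1})=(x_1x_2,x_2x_3,\ldots,x_{2n}x_{2n+1},x_{2n+1}x_1)\subset R$ has the nearly copersistence property.
   Context: A monomial ideal $I\subset R$ has the nearly copersistence property if there exist a positive integer $s$ and a monomial prime ideal $\mathfrak{p}$ such that $\mathrm{Ass}_R(R/I^m)\cup\{\mathfrak{p}\}\supseteq\mathrm{Ass}_R(R/I^{m+1})$ for all $1\le m\le s$, and $\mathrm{Ass}_R(R/I^m)\supseteq\mathrm{Ass}_R(R/I^{m+1})$ for all $m\ge s+1$. *)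

theory Defs
  imports Main "HOL-Library.Poly_Mapping"
begin

text \<open>The ring R = K[x_1,...,x_N] is the subring of polynomials whose monomials only
  involve the variables 0,...,N-1 (variable x_(i+1) is index i).\<close>

type_synonym 'k mpoly = "(nat \<Rightarrow>\<^sub>0 nat) \<Rightarrow>\<^sub>0 'k"

definition polyring :: "nat \<Rightarrow> ('k::field) mpoly set" where
  "polyring N = {p::'k mpoly. \<forall>a\<in>Poly_Mapping.keys p. Poly_Mapping.keys a \<subseteq> {..<N}}"

definition var :: "nat \<Rightarrow> ('k::field) mpoly" where
  "var i = Poly_Mapping.single (Poly_Mapping.single i 1) 1"

definition is_monomial :: "nat \<Rightarrow> ('k::field) mpoly \<Rightarrow> bool" where
  "is_monomial N u \<longleftrightarrow> (\<exists>a. Poly_Mapping.keys a \<subseteq> {..<N} \<and> u = Poly_Mapping.single a 1)"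

definition is_ideal :: "'a::comm_ring_1 set \<Rightarrow> 'a set \<Rightarrow> bool" where
  "is_ideal R I \<longleftrightarrow> I \<subseteq> R \<and> 0 \<in> I \<and> (\<forall>a\<in>I. \<forall>b\<in>I. a + b \<in> I)
     \<and> (\<forall>r\<in>R. \<forall>a\<in>I. r * a \<in> I)"

definition ideal_gen :: "'a::comm_ring_1 set \<Rightarrow> 'a set \<Rightarrow> 'a set" where
  "ideal_gen R G = \<Inter>{I. is_ideal R I \<and> G \<subseteq> I}"

definition ideal_pow :: "'a::comm_ring_1 set \<Rightarrow> 'a set \<Rightarrow> nat \<Rightarrow> 'a set" where
  "ideal_pow R I m = ideal_gen R {prod_list xs | xs. length xs = m \<and> set xs \<subseteq> I}"

definition is_prime_ideal :: "'a::comm_ring_1 set \<Rightarrow> 'a set \<Rightarrow> bool" where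
  "is_prime_ideal R P \<longleftrightarrow> is_ideal R P \<and> P \<noteq> R
     \<and> (\<forall>a\<in>R. \<forall>b\<in>R. a * b \<in> P \<longrightarrow> a \<in> P \<or> b \<in> P)"

definition Ass :: "'a::comm_ring_1 set \<Rightarrow> 'a set \<Rightarrow> 'a set set" where
  "Ass R I = {P. is_prime_ideal R P \<and> (\<exists>f\<in>R. P = {g\<in>R. g * f \<in> I})}"

definition monomial_ideal :: "nat \<Rightarrow> ('k::field) mpoly set \<Rightarrow> bool" where
  "monomial_ideal N I \<longleftrightarrow> (\<exists>M. (\<forall>u\<in>M. is_monomial N u) \<and> I = ideal_gen (polyring N) M)"

definition monomial_prime :: "nat \<Rightarrow> ('k::field) mpoly set \<Rightarrow> bool" where
  "monomial_prime N P \<longleftrightarrow> monomial_ideal N P \<and> is_prime_ideal (polyring N) P"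

definition nearly_copersistent :: "nat \<Rightarrow> ('k::field) mpoly set \<Rightarrow> bool" where
  "nearly_copersistent N I \<longleftrightarrow>
     (\<exists>s::nat. s > 0 \<and> (\<exists>P. monomial_prime N P \<and>
        (\<forall>m. 1 \<le> m \<and> m \<le> s \<longrightarrow>
           Ass (polyring N) (ideal_pow (polyring N) I (m+1))
             \<subseteq> Ass (polyring N) (ideal_pow (polyring N) I m) \<union> {P}) \<and>
        (\<forall>m. m \<ge> s + 1 \<longrightarrow>
           Ass (polyring N) (ideal_pow (polyring N) I (m+1))
             \<subseteq> Ass (polyring N) (ideal_pow (polyring N) I m))))"

text \<open>Edge ideal of the odd cycle C_(2n+1) on x_1..x_(2n+1) (indices 0..2n):
  edges {i, i+1 mod (2n+1)}.\<close>
definition cycle_edge_ideal :: "nat \<Rightarrow> ('k::field) mpoly set" where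
  "cycle_edge_ideal n = ideal_gen (polyring (2*n+1))
     {var i * var ((i + 1) mod (2*n+1)) | i. i < 2*n+1}"

end

theory Submission imports Defs begin

abbreviation lkp where "lkp \<equiv> Poly_Mapping.lookup"
abbreviation kys where "kys \<equiv> Poly_Mapping.keys"
abbreviation sng where "sng \<equiv> Poly_Mapping.single"

definition prv :: "nat \<Rightarrow> nat \<Rightarrow> nat" where "prv N v = (if v = 0 then N - 1 else v - 1)"

definition load :: "nat \<Rightarrow> (nat \<Rightarrow> nat) \<Rightarrow> nat \<Rightarrow> nat" where
  "load N z v = (\<Sum>i<N. (if v = i then z i else 0) + (if v = Suc i mod N then z i else 0))"

lemma Suc_mod_cases: "i < N \<Longrightarrow> Suc i mod N = (if Suc i = N then 0 else Suc i)"
  by auto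

lemma Suc_mod_eq_iff: "i < N \<Longrightarrow> v < N \<Longrightarrow> (v = Suc i mod N) = (i = prv N v)"
  unfolding prv_def by (cases "Suc i = N") auto

lemma prv_less: "0 < N \<Longrightarrow> prv N v < N \<or> v > N"
  unfolding prv_def by auto

lemma prv_lt: "v < N \<Longrightarrow> prv N v < N"
  unfolding prv_def by auto

lemma load_eq: assumes "v < N" shows "load N z v = z v + z (prv N v)"
proof -
  have "load N z v = (\<Sum>i<N. (if v = i then z i else 0)) + (\<Sum>i<N. (if v = Suc i mod N then z i else 0))"
    unfolding load_def by (simp add: sum.distrib)
  also have "(\<Sum>i<N. (if v = i then z i else 0)) = z v" using assms by (simp add: sum.delta)
  also have "(\<Sum>i<N. (if v = Suc i mod N then z i else 0)) = (\<Sum>i<N. (if i = prv N v then z i else 0))"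
    by (rule sum.cong) (use assms Suc_mod_eq_iff in auto)
  also have "\<dots> = z (prv N v)" using prv_lt[OF assms] by (simp add: sum.delta)
  finally show ?thesis .
qed

lemma load_ge: "load N z v = 0" if "N \<le> v"
proof -
  have "\<And>i. i < N \<Longrightarrow> Suc i mod N < N" by simp
  then show ?thesis using that unfolding load_def by (intro sum.neutral ballI) (metis add_0 leD lessThan_iff)
qed

lemma load_mono: "(\<And>i. z' i \<le> z i) \<Longrightarrow> load N z' v \<le> load N z v"
  unfolding load_def by (intro sum_mono) (auto intro: add_mono)

lemma load_add: "load N (\<lambda>i. z1 i + z2 i) v = load N z1 v + load N z2 v"
  unfolding load_def by (simp add: sum.distrib[symmetric]) (rule sum.cong, auto)

definition Mk :: "nat \<Rightarrow> nat \<Rightarrow> (nat \<Rightarrow>\<^sub>0 nat) set" where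
  "Mk N k = {a. \<exists>z. sum z {..<N} = k \<and> (\<forall>v<N. load N z v \<le> lkp a v)}"

definition is_cover :: "nat \<Rightarrow> nat set \<Rightarrow> bool" where
  "is_cover N C \<longleftrightarrow> C \<subseteq> {..<N} \<and> (\<forall>i<N. i \<in> C \<or> Suc i mod N \<in> C)"

definition min_cover :: "nat \<Rightarrow> nat set \<Rightarrow> bool" where
  "min_cover N C \<longleftrightarrow> is_cover N C \<and> (\<forall>D. is_cover N D \<and> D \<subseteq> C \<longrightarrow> D = C)"

lemma Mk_up: "a \<in> Mk N k \<Longrightarrow> (\<And>v. v < N \<Longrightarrow> lkp a v \<le> lkp b v) \<Longrightarrow> b \<in> Mk N k"
  unfolding Mk_def by (auto intro: order_trans)

lemma Mk_add: "a \<in> Mk N k1 \<Longrightarrow> b \<in> Mk N k2 \<Longrightarrow> a + b \<in> Mk N (k1 + k2)"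
  unfolding Mk_def
proof safe
  fix z1 z2 assume h1: "\<forall>v<N. load N z1 v \<le> lkp a v" and h2: "\<forall>v<N. load N z2 v \<le> lkp b v"
  show "\<exists>z. sum z {..<N} = sum z1 {..<N} + sum z2 {..<N} \<and> (\<forall>v<N. load N z v \<le> lkp (a + b) v)"
    by (rule exI[of _ "\<lambda>i. z1 i + z2 i"]) (use h1 h2 in \<open>auto simp: sum.distrib load_add lookup_add intro: add_mono\<close>)
qed

lemma Mk_0: "a \<in> Mk N 0"
  unfolding Mk_def by (rule CollectI, rule exI[of _ "\<lambda>_. 0"]) (simp add: load_def)

lemma shrink: fixes z :: "'a \<Rightarrow> nat" shows "finite A \<Longrightarrow> k \<le> sum z A \<Longrightarrow> \<exists>z'. (\<forall>i. z' i \<le> z i) \<and> sum z' A = k"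
proof (induction A arbitrary: k rule: finite_induct)
  case empty then show ?case by (intro exI[of _ "\<lambda>_. 0"]) auto
next
  case (insert x A)
  show ?case
  proof (cases "k \<le> sum z A")
    case True
    then obtain z' where z': "\<forall>i. z' i \<le> z i" "sum z' A = k" using insert by blast
    have "sum (z'(x := 0)) A = sum z' A" using insert(2) by (intro sum.cong) auto
    then show ?thesis using z' insert(1,2) by (intro exI[of _ "z'(x := 0)"]) auto
  next
    case False
    have "sum (z(x := k - sum z A)) A = sum z A" using insert(2) by (intro sum.cong) auto
    then show ?thesis using False insert by (intro exI[of _ "z(x := k - sum z A)"]) auto
  qed
qed

lemma Mk_ge: "k \<le> sum z {..<N} \<Longrightarrow> (\<And>v. v < N \<Longrightarrow> load N z v \<le> lkp a v) \<Longrightarrow> a \<in> Mk N k"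
proof -
  assume k: "k \<le> sum z {..<N}" and l: "\<And>v. v < N \<Longrightarrow> load N z v \<le> lkp a v"
  obtain z' where "\<forall>i. z' i \<le> z i" "sum z' {..<N} = k" using shrink[OF _ k] by auto
  then show ?thesis unfolding Mk_def using l load_mono by (blast intro: order_trans)
qed

lemma prv_Suc: "i < N \<Longrightarrow> prv N (Suc i mod N) = i"
  using Suc_mod_eq_iff[of i N "Suc i mod N"] by (cases "N = 0") auto

lemma inj_prv: "inj_on (prv N) {..<N}"
  unfolding inj_on_def prv_def by auto

lemma prv_image: "prv N ` {..<N} = {..<N}"
proof -
  have "prv N ` {..<N} \<subseteq> {..<N}" using prv_lt by auto
  moreover have "card (prv N ` {..<N}) = card {..<N}" using inj_prv card_image by blast
  ultimately show ?thesis by (simp add: card_subset_eq)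
qed

lemma sum_prv: "C \<subseteq> {..<N} \<Longrightarrow> (\<Sum>v\<in>C. z (prv N v)) = sum z (prv N ` C)"
  using inj_prv by (subst sum.reindex) (auto intro: inj_on_subset)

lemma cover_bound:
  assumes "is_cover N C" "a \<in> Mk N k"
  shows "k \<le> sum (lkp a) C"
proof -
  obtain z where z: "sum z {..<N} = k" "\<And>v. v < N \<Longrightarrow> load N z v \<le> lkp a v"
    using assms(2) unfolding Mk_def by auto
  have C: "C \<subseteq> {..<N}" using assms(1) unfolding is_cover_def by auto
  have fin: "finite C" using C finite_subset by blast
  have "{..<N} \<subseteq> C \<union> prv N ` C"
  proof
    fix t assume t: "t \<in> {..<N}"
    then have "t \<in> C \<or> Suc t mod N \<in> C" using assms(1) unfolding is_cover_def by auto
    then show "t \<in> C \<union> prv N ` C" using prv_Suc[of t N] t by force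
  qed
  then have "k \<le> sum z (C \<union> prv N ` C)" using z(1) fin by (metis finite_Un finite_imageI sum_mono2 zero_le)
  also have "\<dots> \<le> sum z C + sum z (prv N ` C)" using fin by (simp add: sum_Un_nat)
  also have "\<dots> = (\<Sum>v\<in>C. load N z v)" using C
    by (simp add: sum_prv load_eq subset_eq sum.distrib)
  also have "\<dots> \<le> sum (lkp a) C" using C z(2) by (intro sum_mono) auto
  finally show ?thesis .
qed

lemma degree_bound:
  assumes "a \<in> Mk N k"
  shows "2 * k \<le> (\<Sum>v<N. lkp a v)"
proof -
  obtain z where z: "sum z {..<N} = k" "\<And>v. v < N \<Longrightarrow> load N z v \<le> lkp a v"
    using assms unfolding Mk_def by auto
  have "2 * k = sum z {..<N} + sum z (prv N ` {..<N})" using z(1) prv_image by simp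
  also have "\<dots> = (\<Sum>v<N. load N z v)"
    by (simp add: sum_prv load_eq sum.distrib)
  also have "\<dots> \<le> (\<Sum>v<N. lkp a v)" using z(2) by (intro sum_mono) auto
  finally show ?thesis .
qed

lemma path_konig:
  fixes w :: "nat \<Rightarrow> nat"
  shows "(\<exists>y. sum y {..<M} = k \<and> (\<forall>t\<le>M. (if 0<t then y (t-1) else 0) + (if t<M then y t else 0) \<le> w t))
     \<or> (\<exists>C\<subseteq>{..M}. (\<forall>t<M. t\<in>C \<or> Suc t\<in>C) \<and> sum w C < k)"
proof (induction M arbitrary: w k)
  case 0
  show ?case
  proof (cases "k = 0")
    case True then show ?thesis by (intro disjI1 exI[of _ "\<lambda>_. 0"]) auto
  next
    case False then show ?thesis by (intro disjI2 exI[of _ "{}"]) auto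
  qed
next
  case (Suc M)
  define \<mu> where "\<mu> = min (w (Suc M)) (min (w M) k)"
  define w' where "w' = w(M := w M - \<mu>)"
  have "\<mu> \<le> w M" "\<mu> \<le> w (Suc M)" "\<mu> \<le> k" unfolding \<mu>_def by auto
  from Suc.IH[of "k - \<mu>" w'] show ?case
  proof
    assume "\<exists>y. sum y {..<M} = k - \<mu> \<and> (\<forall>t\<le>M. (if 0<t then y (t-1) else 0) + (if t<M then y t else 0) \<le> w' t)"
    then obtain y where y: "sum y {..<M} = k - \<mu>" "\<And>t. t \<le> M \<Longrightarrow> (if 0<t then y (t-1) else 0) + (if t<M then y t else 0) \<le> w' t"
      by blast
    define y2 where "y2 = y(M := \<mu>)"
    have "sum y2 {..<M} = sum y {..<M}" unfolding y2_def by (intro sum.cong) auto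
    then have s: "sum y2 {..<Suc M} = k" using y(1) \<open>\<mu> \<le> k\<close> by (simp add: y2_def)
    have "(if 0<t then y2 (t-1) else 0) + (if t<Suc M then y2 t else 0) \<le> w t" if t: "t \<le> Suc M" for t
    proof -
      consider "t < M" | "t = M" | "t = Suc M" using t by linarith
      then show ?thesis
      proof cases
        case 1 then show ?thesis using y(2)[of t] by (auto simp: y2_def w'_def split: if_splits)
      next
        case 2 then show ?thesis using y(2)[of t] \<open>\<mu> \<le> w M\<close> by (auto simp: y2_def w'_def split: if_splits)
      next
        case 3 then show ?thesis using \<open>\<mu> \<le> w (Suc M)\<close> by (auto simp: y2_def)
      qed
    qed
    then show ?thesis using s by blast
  next
    assume "\<exists>C\<subseteq>{..M}. (\<forall>t<M. t\<in>C \<or> Suc t\<in>C) \<and> sum w' C < k - \<mu>"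
    then obtain C where C: "C \<subseteq> {..M}" "\<And>t. t < M \<Longrightarrow> t\<in>C \<or> Suc t\<in>C" "sum w' C < k - \<mu>" by blast
    have fin: "finite C" using C(1) finite_subset by blast
    have sp: "sum w C = sum w' C + (if M \<in> C then \<mu> else 0)"
    proof (cases "M \<in> C")
      case True
      have "sum w C = w M + sum w (C - {M})" using True fin by (simp add: sum.remove)
      moreover have "sum w' C = w' M + sum w' (C - {M})" using True fin by (simp add: sum.remove)
      moreover have "sum w' (C - {M}) = sum w (C - {M})" unfolding w'_def by (intro sum.cong) auto
      ultimately show ?thesis using True \<open>\<mu> \<le> w M\<close> by (simp add: w'_def)
    next
      case False
      then have "sum w' C = sum w C" unfolding w'_def by (intro sum.cong) auto
      then show ?thesis using False by simp
    qed
    show ?thesis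
    proof (cases "M \<in> C")
      case True
      then show ?thesis using C sp by (intro disjI2 exI[of _ C]) (auto simp: less_Suc_eq)
    next
      case False
      have "\<mu> < k" using C(3) by linarith
      then have "\<mu> = w (Suc M) \<or> \<mu> = w M" unfolding \<mu>_def by linarith
      then show ?thesis
      proof
        assume m: "\<mu> = w (Suc M)"
        have "Suc M \<notin> C" using C(1) by auto
        then have "sum w (insert (Suc M) C) = w (Suc M) + sum w C" using fin by simp
        then show ?thesis using C sp False m by (intro disjI2 exI[of _ "insert (Suc M) C"]) (auto simp: less_Suc_eq)
      next
        assume m: "\<mu> = w M"
        then have "sum w (insert M C) = w M + sum w C" using fin False by simp
        then show ?thesis using C sp False m by (intro disjI2 exI[of _ "insert M C"]) (auto simp: less_Suc_eq)
      qed
    qed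
  qed
qed

lemma two_le_sum: fixes f :: "'a \<Rightarrow> nat" shows "finite A \<Longrightarrow> i \<in> A \<Longrightarrow> j \<in> A \<Longrightarrow> i \<noteq> j \<Longrightarrow> f i + f j \<le> sum f A"
proof -
  assume a: "finite A" "i \<in> A" "j \<in> A" "i \<noteq> j"
  have "f i + f j = sum f {i, j}" using a by simp
  also have "\<dots> \<le> sum f A" using a by (intro sum_mono2) auto
  finally show ?thesis .
qed

lemma cycle_konig0:
  fixes w :: "nat \<Rightarrow> nat"
  assumes N: "2 \<le> N" and k: "k \<le> w 0"
  shows "(\<exists>z. sum z {..<N} = k \<and> (\<forall>v<N. load N z v \<le> w v)) \<or> (\<exists>C. is_cover N C \<and> 0 \<notin> C \<and> sum w C < k)"
proof -
  define wp where "wp t = (if t = 0 \<or> t = N then k else w t)" for t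
  from path_konig[of N k wp] show ?thesis
  proof
    assume "\<exists>y. sum y {..<N} = k \<and> (\<forall>t\<le>N. (if 0<t then y (t-1) else 0) + (if t<N then y t else 0) \<le> wp t)"
    then obtain y where y: "sum y {..<N} = k" "\<And>t. t\<le>N \<Longrightarrow> (if 0<t then y (t-1) else 0) + (if t<N then y t else 0) \<le> wp t"
      by blast
    have "load N y v \<le> w v" if v: "v < N" for v
    proof (cases "v = 0")
      case True
      have "y 0 + y (N - 1) \<le> k" using two_le_sum[of "{..<N}" 0 "N-1" y] y(1) N by simp
      then show ?thesis using True v k by (simp add: load_eq prv_def)
    next
      case False
      then show ?thesis using y(2)[of v] v by (simp add: load_eq prv_def wp_def add.commute)
    qed
    then show ?thesis using y(1) by blast
  next
    assume "\<exists>C\<subseteq>{..N}. (\<forall>t<N. t\<in>C \<or> Suc t\<in>C) \<and> sum wp C < k"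
    then obtain C where C: "C \<subseteq> {..N}" "\<And>t. t<N \<Longrightarrow> t\<in>C \<or> Suc t\<in>C" "sum wp C < k" by blast
    have fin: "finite C" using C(1) finite_subset by blast
    have nz: "x \<notin> C" if "x = 0 \<or> x = N" for x
    proof
      assume "x \<in> C"
      then have "wp x \<le> sum wp C" using fin by (intro member_le_sum) auto
      then show False using C(3) that by (auto simp: wp_def)
    qed
    have "sum wp C = sum w C" using nz by (intro sum.cong) (auto simp: wp_def)
    moreover have "is_cover N C"
      unfolding is_cover_def
    proof safe
      fix x assume "x \<in> C" then show "x < N" using C(1) nz[of x] by fastforce
    next
      fix i assume "i < N" "Suc i mod N \<notin> C"
      then show "i \<in> C" using C(2)[of i] nz[of "Suc i"] by (cases "Suc i = N") auto
    qed
    ultimately show ?thesis using C(3) nz[of 0] by auto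
  qed
qed

definition rot :: "nat \<Rightarrow> nat \<Rightarrow> nat \<Rightarrow> nat" where "rot N j v = (v + j) mod N"

lemma rot_inv: "j \<le> N \<Longrightarrow> v < N \<Longrightarrow> rot N (N - j) (rot N j v) = v"
proof -
  assume a: "j \<le> N" "v < N"
  have "((v + j) mod N + (N - j)) mod N = (v + j + (N - j)) mod N" by (rule mod_add_left_eq)
  also have "v + j + (N - j) = v + N" using a by simp
  finally show ?thesis using a unfolding rot_def by simp
qed

lemma rot_inv2: "j \<le> N \<Longrightarrow> v < N \<Longrightarrow> rot N j (rot N (N - j) v) = v"
proof -
  assume a: "j \<le> N" "v < N"
  have "((v + (N - j)) mod N + j) mod N = (v + (N - j) + j) mod N" by (rule mod_add_left_eq)
  also have "v + (N - j) + j = v + N" using a by simp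
  finally show ?thesis using a unfolding rot_def by simp
qed

lemma rot_lt: "v < N \<Longrightarrow> rot N j v < N"
  unfolding rot_def by simp

lemma prv_mod: "v < N \<Longrightarrow> prv N v = (v + (N - 1)) mod N"
  unfolding prv_def by (cases v) (auto simp: mod_add_self1 add.commute)

lemma rot_prv: "v < N \<Longrightarrow> prv N (rot N r v) = rot N r (prv N v)"
  using rot_lt prv_lt prv_mod unfolding rot_def
  by (smt (verit) add.commute add.left_commute mod_add_left_eq mod_add_right_eq)

lemma rot_Suc: "0 < N \<Longrightarrow> Suc (rot N j t) mod N = rot N j (Suc t mod N)"
  unfolding rot_def by (simp add: mod_Suc_eq mod_add_left_eq)

lemma inj_rot: "j \<le> N \<Longrightarrow> inj_on (rot N j) {..<N}"
  by (metis inj_on_inverseI lessThan_iff rot_inv)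

lemma rot_image: "rot N j ` {..<N} = {..<N}" if "j \<le> N"
proof
  show "rot N j ` {..<N} \<subseteq> {..<N}" using rot_lt by auto
  show "{..<N} \<subseteq> rot N j ` {..<N}"
  proof
    fix x assume "x \<in> {..<N}"
    then show "x \<in> rot N j ` {..<N}" using that rot_inv2[of j N x] rot_lt[of x N "N - j"]
      by (metis image_eqI lessThan_iff)
  qed
qed

lemma cycle_konig:
  fixes w :: "nat \<Rightarrow> nat"
  assumes N: "2 \<le> N" and j: "j < N" and k: "k \<le> w j"
  shows "(\<exists>z. sum z {..<N} = k \<and> (\<forall>v<N. load N z v \<le> w v)) \<or> (\<exists>C. is_cover N C \<and> j \<notin> C \<and> sum w C < k)"
proof -
  define w' where "w' v = w (rot N j v)" for v
  have "k \<le> w' 0" using k j unfolding w'_def rot_def by simp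
  from cycle_konig0[of N k w', OF N this] show ?thesis
  proof
    assume "\<exists>z. sum z {..<N} = k \<and> (\<forall>v<N. load N z v \<le> w' v)"
    then obtain z' where z': "sum z' {..<N} = k" "\<And>v. v<N \<Longrightarrow> load N z' v \<le> w' v" by blast
    define z where "z t = z' (rot N (N - j) t)" for t
    have "sum z {..<N} = sum z' (rot N (N - j) ` {..<N})"
      unfolding z_def using inj_rot[of "N - j" N] by (simp add: sum.reindex)
    also have "\<dots> = k" using rot_image[of "N - j" N] z'(1) by simp
    finally have s: "sum z {..<N} = k" .
    have "load N z v \<le> w v" if v: "v < N" for v
    proof -
      have "load N z v = z' (rot N (N - j) v) + z' (prv N (rot N (N - j) v))"
        using v prv_lt rot_prv by (simp add: load_eq z_def)
      also have "\<dots> = load N z' (rot N (N - j) v)" using v rot_lt by (simp add: load_eq)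
      also have "\<dots> \<le> w' (rot N (N - j) v)" using v rot_lt z'(2) by blast
      also have "\<dots> = w v" unfolding w'_def using rot_inv2[of j N v] j v by simp
      finally show ?thesis .
    qed
    then show ?thesis using s by blast
  next
    assume "\<exists>C. is_cover N C \<and> 0 \<notin> C \<and> sum w' C < k"
    then obtain C' where C': "is_cover N C'" "0 \<notin> C'" "sum w' C' < k" by blast
    have C'N: "C' \<subseteq> {..<N}" using C'(1) unfolding is_cover_def by auto
    define C where "C = rot N j ` C'"
    have "sum w C = sum w' C'" unfolding C_def w'_def using inj_on_subset[OF inj_rot[of j N] C'N] j
      by (simp add: sum.reindex)
    moreover have "j \<notin> C"
    proof
      assume "j \<in> C"
      then obtain v where v: "v \<in> C'" "rot N j v = j" unfolding C_def by auto
      have "v < N" using v C'N by auto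
      then have "v = rot N (N - j) j" using rot_inv[of j N v] v j by simp
      also have "\<dots> = 0" unfolding rot_def using j by simp
      finally show False using v C'(2) by simp
    qed
    moreover have "is_cover N C"
      unfolding is_cover_def
    proof safe
      fix x assume "x \<in> C" then show "x < N" unfolding C_def using C'N rot_lt by auto
    next
      fix i assume i: "i < N" "Suc i mod N \<notin> C"
      define t where "t = rot N (N - j) i"
      have t: "t < N" "rot N j t = i" using i rot_lt rot_inv2[of j N i] j unfolding t_def by auto
      have "t \<in> C' \<or> Suc t mod N \<in> C'" using C'(1) t unfolding is_cover_def by auto
      moreover have "rot N j (Suc t mod N) = Suc i mod N" using rot_Suc[of N j t] t N by simp
      ultimately show "i \<in> C" using i t unfolding C_def by (metis image_eqI)
    qed
    ultimately show ?thesis using C'(3) by auto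
  qed
qed

lemma min_cover_exists:
  assumes "is_cover N C" shows "\<exists>D. D \<subseteq> C \<and> min_cover N D"
proof -
  obtain D where D: "D \<subseteq> C \<and> is_cover N D" "\<And>E. E \<subseteq> C \<and> is_cover N E \<Longrightarrow> card D \<le> card E"
    using ex_has_least_nat[of "\<lambda>D. D \<subseteq> C \<and> is_cover N D" C card] assms by blast
  have finD: "finite D" using D(1) unfolding is_cover_def by (meson finite_lessThan finite_subset)
  have "min_cover N D" unfolding min_cover_def
  proof (intro conjI allI impI)
    show "is_cover N D" using D(1) by simp
    fix E assume E: "is_cover N E \<and> E \<subseteq> D"
    then have "card D \<le> card E" using D by blast
    then show "E = D" using E finD by (meson card_seteq)
  qed
  then show ?thesis using D(1) by blast
qed

lemma konig_Mk:
  assumes N: "2 \<le> N" and j: "j < N" and k: "k \<le> lkp c j"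
    and cov: "\<And>C. min_cover N C \<Longrightarrow> j \<notin> C \<Longrightarrow> k \<le> sum (lkp c) C"
  shows "c \<in> Mk N k"
proof -
  from cycle_konig[of N j k "lkp c", OF N j k] show ?thesis
  proof
    assume "\<exists>z. sum z {..<N} = k \<and> (\<forall>v<N. load N z v \<le> lkp c v)"
    then show ?thesis unfolding Mk_def by blast
  next
    assume "\<exists>C. is_cover N C \<and> j \<notin> C \<and> sum (lkp c) C < k"
    then obtain C where C: "is_cover N C" "j \<notin> C" "sum (lkp c) C < k" by blast
    obtain D where D: "D \<subseteq> C" "min_cover N D" using min_cover_exists[OF C(1)] by blast
    have "finite C" using C(1) unfolding is_cover_def by (meson finite_lessThan finite_subset)
    then have "sum (lkp c) D \<le> sum (lkp c) C" using D(1) by (intro sum_mono2) auto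
    moreover have "k \<le> sum (lkp c) D" using cov[OF D(2)] D(1) C(2) by blast
    ultimately show ?thesis using C(3) by linarith
  qed
qed

lemma R_single: "kys a \<subseteq> {..<N} \<Longrightarrow> sng a c \<in> polyring N"
  unfolding polyring_def by auto

lemma R_0: "0 \<in> polyring N" unfolding polyring_def by auto
lemma R_1: "1 \<in> polyring N" unfolding polyring_def by auto

lemma R_add: "p \<in> polyring N \<Longrightarrow> q \<in> polyring N \<Longrightarrow> p + q \<in> polyring N"
  unfolding polyring_def using keys_add[of p q] by (simp add: subset_iff) (meson UnE)

lemma keys_plus_nat: "kys ((a::nat \<Rightarrow>\<^sub>0 nat) + b) = kys a \<union> kys b"
  by (auto simp: in_keys_iff lookup_add)

lemma R_mult: "p \<in> polyring N \<Longrightarrow> q \<in> polyring N \<Longrightarrow> p * q \<in> polyring N"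
  unfolding polyring_def using keys_mult[of p q] by (fastforce simp: keys_plus_nat)

lemma R_uminus: "p \<in> polyring N \<Longrightarrow> - p \<in> polyring N"
  unfolding polyring_def by simp

lemma R_var: "i < N \<Longrightarrow> (var i :: 'k::field mpoly) \<in> polyring N"
  unfolding var_def by (rule R_single) auto

lemma R_sum: "(\<And>x. x \<in> A \<Longrightarrow> f x \<in> polyring N) \<Longrightarrow> sum f A \<in> polyring N"
  by (induction A rule: infinite_finite_induct) (auto intro: R_0 R_add)

lemma R_power: "p \<in> polyring N \<Longrightarrow> p ^ k \<in> polyring N"
  by (induction k) (auto intro: R_1 R_mult)

lemma ideal_R: "is_ideal (polyring N) (polyring N)"
  unfolding is_ideal_def by (auto intro: R_0 R_add R_mult)

lemma ideal_gen_ideal: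
  assumes "G \<subseteq> R" "is_ideal R R" shows "is_ideal R (ideal_gen R G)"
  unfolding is_ideal_def
proof (intro conjI ballI)
  let ?F = "{I. is_ideal R I \<and> G \<subseteq> I}"
  have RF: "R \<in> ?F" using assms by simp
  show "ideal_gen R G \<subseteq> R" unfolding ideal_gen_def using RF by blast
  show "0 \<in> ideal_gen R G" unfolding ideal_gen_def is_ideal_def by blast
  fix a assume a: "a \<in> ideal_gen R G"
  {
    fix b assume b: "b \<in> ideal_gen R G"
    show "a + b \<in> ideal_gen R G" unfolding ideal_gen_def
    proof
      fix I assume "I \<in> ?F"
      then show "a + b \<in> I" using a b unfolding ideal_gen_def is_ideal_def by blast
    qed
  }
  fix r assume r: "r \<in> R"
  show "r * a \<in> ideal_gen R G" unfolding ideal_gen_def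
  proof
    fix I assume "I \<in> ?F"
    then show "r * a \<in> I" using a r unfolding ideal_gen_def is_ideal_def by blast
  qed
qed

lemma ideal_gen_sub: "G \<subseteq> ideal_gen R G"
  unfolding ideal_gen_def by auto

lemma ideal_gen_least: "is_ideal R J \<Longrightarrow> G \<subseteq> J \<Longrightarrow> ideal_gen R G \<subseteq> J"
  unfolding ideal_gen_def by auto

lemma ideal_sum: "is_ideal R J \<Longrightarrow> (\<And>x. x \<in> A \<Longrightarrow> f x \<in> J) \<Longrightarrow> sum f A \<in> J"
  unfolding is_ideal_def by (induction A rule: infinite_finite_induct) auto

lemma ideal_mult: "is_ideal R J \<Longrightarrow> r \<in> R \<Longrightarrow> a \<in> J \<Longrightarrow> r * a \<in> J"
  unfolding is_ideal_def by auto

lemma ideal_sub: "is_ideal R J \<Longrightarrow> J \<subseteq> R"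
  unfolding is_ideal_def by auto

lemma ideal_diff:
  assumes "is_ideal (polyring N) J" "a \<in> J" "b \<in> J" shows "a - b \<in> J"
proof -
  have "(-1) \<in> polyring N" using R_uminus[OF R_1[of N]] by simp
  then have "(-1) * b \<in> J" using assms ideal_mult by blast
  then show ?thesis using assms unfolding is_ideal_def by (metis diff_conv_add_uminus mult_minus1)
qed

lemma lookup_sum_single:
  "finite A \<Longrightarrow> lkp (\<Sum>x\<in>A. sng (g x) (c x)) y = (\<Sum>x\<in>A. if g x = y then c x else 0)"
  by (simp add: lookup_sum lookup_single when_def)

lemma poly_decomp: "p = (\<Sum>a\<in>kys p. sng a (lkp p a))"
proof (rule poly_mapping_eqI)
  fix y
  have "lkp (\<Sum>a\<in>kys p. sng a (lkp p a)) y = (\<Sum>a\<in>kys p. if a = y then lkp p a else 0)"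
    by (simp add: lookup_sum_single)
  also have "\<dots> = lkp p y" by (simp add: sum.delta in_keys_iff)
  finally show "lkp p y = lkp (\<Sum>a\<in>kys p. sng a (lkp p a)) y" by simp
qed

lemma mult_mono_lookup:
  fixes p :: "'k::field mpoly"
  shows "lkp (p * sng a 1) (b + a) = lkp p b"
proof -
  have "p * sng a 1 = (\<Sum>x\<in>kys p. sng (x + a) (lkp p x))"
    by (subst (1) poly_decomp[of p]) (simp add: sum_distrib_right mult_single)
  then have "lkp (p * sng a 1) (b + a) = (\<Sum>x\<in>kys p. if x + a = b + a then lkp p x else 0)"
    by (simp add: lookup_sum_single)
  also have "\<dots> = (\<Sum>x\<in>kys p. if x = b then lkp p x else 0)" by simp
  also have "\<dots> = lkp p b" by (simp add: sum.delta in_keys_iff)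
  finally show ?thesis .
qed

lemma keys_mult_mono:
  fixes p :: "'k::field mpoly"
  shows "kys (p * sng a 1) = (\<lambda>b. b + a) ` kys p"
proof
  show "kys (p * sng a 1) \<subseteq> (\<lambda>b. b + a) ` kys p"
    using keys_mult[of p "sng a 1"] by auto
  show "(\<lambda>b. b + a) ` kys p \<subseteq> kys (p * sng a 1)"
    using mult_mono_lookup[of p a] by (auto simp: in_keys_iff)
qed

section \<open>Valuations\<close>

definition degC :: "nat set \<Rightarrow> (nat \<Rightarrow>\<^sub>0 nat) \<Rightarrow> nat" where "degC C a = sum (lkp a) C"

lemma degC_add: "degC C (a + b) = degC C a + degC C b"
  unfolding degC_def by (simp add: lookup_add sum.distrib)

definition vC :: "nat set \<Rightarrow> 'k::field mpoly \<Rightarrow> nat" where "vC C p = Min (degC C ` kys p)"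

lemma vC_le: "x \<in> kys p \<Longrightarrow> vC C p \<le> degC C x"
  unfolding vC_def by (simp add: Min_le)

lemma vC_ex: "p \<noteq> 0 \<Longrightarrow> \<exists>x\<in>kys p. degC C x = vC C p"
proof -
  assume "p \<noteq> 0"
  then have "kys p \<noteq> {}" by simp
  then have "vC C p \<in> degC C ` kys p" unfolding vC_def by (intro Min_in) auto
  then show ?thesis by auto
qed

definition rst :: "'k::field mpoly \<Rightarrow> (nat \<Rightarrow>\<^sub>0 nat) set \<Rightarrow> 'k mpoly" where
  "rst p A = (\<Sum>x\<in>kys p \<inter> A. sng x (lkp p x))"

lemma lookup_rst: "lkp (rst p A) y = (if y \<in> A then lkp p y else 0)"
  unfolding rst_def by (simp add: lookup_sum_single sum.delta in_keys_iff)

lemma keys_rst: "kys (rst p A) = kys p \<inter> A"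
  by (auto simp: in_keys_iff lookup_rst split: if_splits)

lemma rst_split: "p = rst p A + rst p (- A)"
  by (rule poly_mapping_eqI) (simp add: lookup_add lookup_rst)

lemma val_mult:
  fixes a b :: "'k::field mpoly"
  assumes a: "a \<noteq> 0" and b: "b \<noteq> 0"
  shows "\<exists>c\<in>kys (a * b). degC C c = vC C a + vC C b"
proof -
  define La where "La = {x. degC C x = vC C a}"
  define Lb where "Lb = {x. degC C x = vC C b}"
  define a0 where "a0 = rst a La"
  define a1 where "a1 = rst a (- La)"
  define b0 where "b0 = rst b Lb"
  define b1 where "b1 = rst b (- Lb)"
  have k0a: "degC C x = vC C a" if "x \<in> kys a0" for x using that by (simp add: a0_def keys_rst La_def)
  have k1a: "degC C x > vC C a" if "x \<in> kys a1" for x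
    using that vC_le[of x a C] by (simp add: a1_def keys_rst La_def)
  have k0b: "degC C x = vC C b" if "x \<in> kys b0" for x using that by (simp add: b0_def keys_rst Lb_def)
  have k1b: "degC C x > vC C b" if "x \<in> kys b1" for x
    using that vC_le[of x b C] by (simp add: b1_def keys_rst Lb_def)
  have "a0 \<noteq> 0"
  proof -
    obtain x where "x \<in> kys a" "degC C x = vC C a" using vC_ex[OF a] by blast
    then have "x \<in> kys a0" by (simp add: a0_def keys_rst La_def)
    then show ?thesis by auto
  qed
  moreover have "b0 \<noteq> 0"
  proof -
    obtain x where "x \<in> kys b" "degC C x = vC C b" using vC_ex[OF b] by blast
    then have "x \<in> kys b0" by (simp add: b0_def keys_rst Lb_def)
    then show ?thesis by auto
  qed
  ultimately have "a0 * b0 \<noteq> 0" by simp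
  then have "kys (a0 * b0) \<noteq> {}" by simp
  then obtain c where c: "c \<in> kys (a0 * b0)" by blast
  then obtain x y where xy: "c = x + y" "x \<in> kys a0" "y \<in> kys b0" using keys_mult[of a0 b0] by blast
  have dc: "degC C c = vC C a + vC C b" using xy k0a k0b by (simp add: degC_add)
  define r where "r = a0 * b1 + a1 * b0 + a1 * b1"
  have "c \<notin> kys r"
  proof
    assume "c \<in> kys r"
    then have "c \<in> kys (a0 * b1) \<or> c \<in> kys (a1 * b0) \<or> c \<in> kys (a1 * b1)"
      unfolding r_def using keys_add[of "a0 * b1 + a1 * b0" "a1 * b1"] keys_add[of "a0 * b1" "a1 * b0"]
      by (auto simp del: keys_add)
    then show False
    proof (elim disjE)
      assume "c \<in> kys (a0 * b1)"
      then obtain x y where "c = x + y" "x \<in> kys a0" "y \<in> kys b1" using keys_mult[of a0 b1] by blast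
      then have "degC C c > vC C a + vC C b" using k0a k1b by (simp add: degC_add)
      then show False using dc by simp
    next
      assume "c \<in> kys (a1 * b0)"
      then obtain x y where "c = x + y" "x \<in> kys a1" "y \<in> kys b0" using keys_mult[of a1 b0] by blast
      then have "degC C c > vC C a + vC C b" using k1a k0b by (simp add: degC_add)
      then show False using dc by simp
    next
      assume "c \<in> kys (a1 * b1)"
      then obtain x y where "c = x + y" "x \<in> kys a1" "y \<in> kys b1" using keys_mult[of a1 b1] by blast
      then have "degC C c > vC C a + vC C b" using k1a k1b by (simp add: degC_add add_strict_mono)
      then show False using dc by simp
    qed
  qed
  have ea: "a = a0 + a1" unfolding a0_def a1_def by (rule rst_split)
  have eb: "b = b0 + b1" unfolding b0_def b1_def by (rule rst_split)
  have "a * b = (a0 + a1) * (b0 + b1)" using ea eb by simp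
  also have "\<dots> = a0 * b0 + r" unfolding r_def by (simp only: distrib_left distrib_right add.assoc add.left_commute)
  finally have "a * b = a0 * b0 + r" .
  then have "lkp (a * b) c = lkp (a0 * b0) c"
    using \<open>c \<notin> kys r\<close> by (simp add: lookup_add in_keys_iff)
  then have "c \<in> kys (a * b)" using c by (simp add: in_keys_iff)
  then show ?thesis using dc by blast
qed

section \<open>Monomial primes\<close>

definition PC :: "nat \<Rightarrow> nat set \<Rightarrow> 'k::field mpoly set" where
  "PC N C = {p \<in> polyring N. \<forall>a\<in>kys p. \<exists>i\<in>C. 0 < lkp a i}"

lemma degC_pos: assumes "finite C" shows "(\<exists>i\<in>C. 0 < lkp a i) \<longleftrightarrow> 0 < degC C a"
proof
  assume "\<exists>i\<in>C. 0 < lkp a i"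
  then obtain i where "i \<in> C" "0 < lkp a i" by blast
  moreover then have "lkp a i \<le> sum (lkp a) C" using assms by (intro member_le_sum) auto
  ultimately show "0 < degC C a" unfolding degC_def by linarith
next
  assume "0 < degC C a"
  then show "\<exists>i\<in>C. 0 < lkp a i" unfolding degC_def by (metis gr0I sum.neutral less_irrefl)
qed

lemma PC_ideal: "is_ideal (polyring N) (PC N C :: 'k::field mpoly set)"
  unfolding is_ideal_def
proof (intro conjI ballI)
  show "PC N C \<subseteq> polyring N" unfolding PC_def by auto
  show "0 \<in> (PC N C :: 'k mpoly set)" unfolding PC_def by (auto intro: R_0)
  fix a assume a: "a \<in> (PC N C :: 'k mpoly set)"
  {
    fix b assume b: "b \<in> (PC N C :: 'k mpoly set)"
    show "a + b \<in> PC N C" using a b keys_add[of a b] unfolding PC_def by (auto intro: R_add)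
  }
  fix r assume r: "r \<in> (polyring N :: 'k mpoly set)"
  have "\<exists>i\<in>C. 0 < lkp c i" if "c \<in> kys (r * a)" for c
  proof -
    obtain x y where "c = x + y" "y \<in> kys a" using keys_mult[of r a] \<open>c \<in> kys (r * a)\<close> by blast
    then show ?thesis using a unfolding PC_def by (auto simp: lookup_add)
  qed
  then show "r * a \<in> PC N C" using a r unfolding PC_def by (auto intro: R_mult)
qed

lemma one_notin_PC: "(1::'k::field mpoly) \<notin> PC N C"
  unfolding PC_def by simp

lemma notin_PC:
  assumes "finite C" "p \<in> polyring N" "p \<notin> PC N C"
  shows "p \<noteq> 0 \<and> vC C p = 0"
proof -
  obtain x where x: "x \<in> kys p" "\<forall>i\<in>C. lkp x i = 0" using assms unfolding PC_def by auto
  then have "degC C x = 0" unfolding degC_def by simp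
  then show ?thesis using x vC_le[of x p C] by auto
qed

lemma PC_prime:
  assumes C: "C \<subseteq> {..<N}"
  shows "is_prime_ideal (polyring N) (PC N C :: 'k::field mpoly set)"
  unfolding is_prime_ideal_def
proof (intro conjI ballI impI)
  show "is_ideal (polyring N) (PC N C :: 'k mpoly set)" by (rule PC_ideal)
  show "(PC N C :: 'k mpoly set) \<noteq> polyring N" using one_notin_PC R_1 by blast
  have fin: "finite C" using C finite_subset by blast
  fix a b :: "'k mpoly" assume a: "a \<in> polyring N" and b: "b \<in> polyring N" and ab: "a * b \<in> PC N C"
  show "a \<in> PC N C \<or> b \<in> PC N C"
  proof (rule ccontr)
    assume "\<not> (a \<in> PC N C \<or> b \<in> PC N C)"
    then have "a \<noteq> 0 \<and> vC C a = 0" "b \<noteq> 0 \<and> vC C b = 0" using notin_PC[OF fin] a b by blast+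
    then obtain c where "c \<in> kys (a * b)" "degC C c = 0" using val_mult[of a b C] by auto
    then show False using ab fin degC_pos[OF fin, of c] unfolding PC_def by auto
  qed
qed

lemma single_split: "0 < lkp a i \<Longrightarrow> a = (a - sng i 1) + sng i (1::nat)"
  by (rule poly_mapping_eqI) (auto simp: lookup_add minus_poly_mapping.rep_eq lookup_single when_def)

lemma PC_least:
  assumes J: "is_ideal (polyring N) J" and C: "C \<subseteq> {..<N}" and v: "\<And>i. i \<in> C \<Longrightarrow> (var i :: 'k::field mpoly) \<in> J"
  shows "(PC N C :: 'k mpoly set) \<subseteq> J"
proof
  fix p :: "'k mpoly" assume p: "p \<in> PC N C"
  have "sng a (lkp p a) \<in> J" if a: "a \<in> kys p" for a
  proof -
    obtain i where i: "i \<in> C" "0 < lkp a i" using p a unfolding PC_def by auto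
    have ka: "kys a \<subseteq> {..<N}" using p a unfolding PC_def polyring_def by auto
    have "kys (a - sng i 1) \<subseteq> kys a" by (auto simp: in_keys_iff minus_poly_mapping.rep_eq)
    then have r: "sng (a - sng i 1) (lkp p a) \<in> polyring N" using ka by (intro R_single) auto
    have "sng a (lkp p a) = sng (a - sng i 1) (lkp p a) * var i"
      unfolding var_def mult_single using single_split[OF i(2)] by simp
    then show ?thesis using ideal_mult[OF J r v[OF i(1)]] by simp
  qed
  then have "(\<Sum>a\<in>kys p. sng a (lkp p a)) \<in> J" by (intro ideal_sum[OF J]) auto
  then show "p \<in> J" using poly_decomp[of p] by simp
qed

section \<open>Powers of the edge ideal\<close>

definition Sk :: "nat \<Rightarrow> nat \<Rightarrow> 'k::field mpoly set" where
  "Sk N k = {p \<in> polyring N. \<forall>a\<in>kys p. a \<in> Mk N k}"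

definition G1 :: "nat \<Rightarrow> 'k::field mpoly set" where
  "G1 N = {var i * var (Suc i mod N) | i. i < N}"

definition ez :: "nat \<Rightarrow> (nat \<Rightarrow> nat) \<Rightarrow> (nat \<Rightarrow>\<^sub>0 nat)" where
  "ez N z = (\<Sum>i<N. sng i (z i) + sng (Suc i mod N) (z i))"

lemma lookup_ez: "lkp (ez N z) v = load N z v"
  unfolding ez_def load_def lookup_sum by (intro sum.cong refl) (auto simp: lookup_add lookup_single when_def)

lemma load_delta:
  assumes i: "i < N"
  shows "load N (\<lambda>t. if t = i then c else 0) v = (if v = i then c else 0) + (if v = Suc i mod N then c else 0)"
proof (cases "v < N")
  case True
  have "(prv N v = i) = (v = Suc i mod N)" using Suc_mod_eq_iff[OF i True] by auto
  then show ?thesis using True by (simp add: load_eq)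
next
  case False
  have "Suc i mod N < N" using i by simp
  then show ?thesis using False i load_ge[of N v] by auto
qed

lemma Sk_ideal: "is_ideal (polyring N) (Sk N k :: 'k::field mpoly set)"
  unfolding is_ideal_def
proof (intro conjI ballI)
  show "Sk N k \<subseteq> polyring N" unfolding Sk_def by auto
  show "0 \<in> (Sk N k :: 'k mpoly set)" unfolding Sk_def by (auto intro: R_0)
  fix a assume a: "a \<in> (Sk N k :: 'k mpoly set)"
  {
    fix b assume b: "b \<in> (Sk N k :: 'k mpoly set)"
    show "a + b \<in> Sk N k" using a b keys_add[of a b] unfolding Sk_def by (auto intro: R_add)
  }
  fix r assume r: "r \<in> (polyring N :: 'k mpoly set)"
  have "c \<in> Mk N k" if "c \<in> kys (r * a)" for c
  proof -
    obtain x y where xy: "c = x + y" "y \<in> kys a" using keys_mult[of r a] \<open>c \<in> kys (r * a)\<close> by blast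
    then have "y \<in> Mk N k" using a unfolding Sk_def by auto
    show ?thesis by (rule Mk_up[OF \<open>y \<in> Mk N k\<close>]) (simp add: xy lookup_add)
  qed
  then show "r * a \<in> Sk N k" using a r unfolding Sk_def by (auto intro: R_mult)
qed

lemma var_mult: "var i * var j = (sng (sng i 1 + sng j 1) 1 :: 'k::field mpoly)"
  unfolding var_def by (simp add: mult_single)

lemma edge_Mk:
  assumes "i < N"
  shows "sng i 1 + sng (Suc i mod N) 1 \<in> Mk N 1"
proof -
  have "load N (\<lambda>t. if t = i then 1 else 0) v \<le> lkp (sng i 1 + sng (Suc i mod N) 1) v" for v
    using assms by (simp add: load_delta lookup_add lookup_single when_def)
  moreover have "sum (\<lambda>t. if t = i then 1 else 0) {..<N} = (1::nat)" using assms by (simp add: sum.delta)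
  ultimately show ?thesis unfolding Mk_def by blast
qed

lemma G1_R: "G1 N \<subseteq> (polyring N :: 'k::field mpoly set)"
proof
  fix g :: "'k mpoly" assume "g \<in> G1 N"
  then obtain i where i: "i < N" "g = var i * var (Suc i mod N)" unfolding G1_def by auto
  then have "Suc i mod N < N" by simp
  then show "g \<in> polyring N" using i by (simp add: R_mult R_var)
qed

lemma G1_Sk: "G1 N \<subseteq> (Sk N 1 :: 'k::field mpoly set)"
proof
  fix g :: "'k mpoly" assume "g \<in> G1 N"
  then obtain i where i: "i < N" "g = var i * var (Suc i mod N)" unfolding G1_def by auto
  then have "g = sng (sng i 1 + sng (Suc i mod N) 1) 1" by (simp add: var_mult)
  moreover have "g \<in> polyring N" using G1_R \<open>g \<in> G1 N\<close> by blast
  ultimately show "g \<in> Sk N 1" unfolding Sk_def using edge_Mk[OF i(1)] by simp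
qed

lemma Sk_mult:
  assumes "p \<in> (Sk N k1 :: 'k::field mpoly set)" "q \<in> Sk N k2"
  shows "p * q \<in> Sk N (k1 + k2)"
proof -
  have "c \<in> Mk N (k1 + k2)" if "c \<in> kys (p * q)" for c
  proof -
    obtain x y where xy: "c = x + y" "x \<in> kys p" "y \<in> kys q" using keys_mult[of p q] \<open>c \<in> kys (p * q)\<close> by blast
    then show ?thesis using assms Mk_add unfolding Sk_def by blast
  qed
  then show ?thesis using assms unfolding Sk_def by (auto intro: R_mult)
qed

lemma prod_list_Sk:
  "set xs \<subseteq> (Sk N 1 :: 'k::field mpoly set) \<Longrightarrow> prod_list xs \<in> Sk N (length xs)"
proof (induction xs)
  case Nil then show ?case unfolding Sk_def by (auto intro: R_1 Mk_0)
next
  case (Cons x xs)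
  then have "x * prod_list xs \<in> Sk N (1 + length xs)" by (intro Sk_mult) auto
  then show ?case by simp
qed

lemma gens_exist:
  assumes N: "2 \<le> N"
  shows "sum z {..<N} = k \<Longrightarrow> \<exists>xs. length xs = k \<and> set xs \<subseteq> (G1 N :: 'k::field mpoly set) \<and> prod_list xs = sng (ez N z) 1"
proof (induction k arbitrary: z)
  case 0
  then have "\<forall>i<N. z i = 0" by simp
  then have "ez N z = 0" unfolding ez_def by simp
  then show ?case by (intro exI[of _ "[]"]) simp
next
  case (Suc k)
  obtain i where i: "i < N" "0 < z i" using Suc.prems
    by (metis lessThan_iff neq0_conv sum.neutral nat.simps(3))
  define z' where "z' = z(i := z i - 1)"
  have "sum z {..<N} = z i + sum z ({..<N} - {i})" using i by (simp add: sum.remove)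
  moreover have "sum z' {..<N} = z' i + sum z' ({..<N} - {i})" using i by (simp add: sum.remove)
  moreover have "sum z' ({..<N} - {i}) = sum z ({..<N} - {i})" unfolding z'_def by (intro sum.cong) auto
  ultimately have "sum z' {..<N} = k" using Suc.prems i by (simp add: z'_def)
  then obtain xs where xs: "length xs = k" "set xs \<subseteq> (G1 N :: 'k mpoly set)" "prod_list xs = sng (ez N z') 1"
    using Suc.IH by blast
  have zz: "z = (\<lambda>t. z' t + (if t = i then 1 else 0))" using i unfolding z'_def by auto
  have ez: "ez N z = sng i 1 + sng (Suc i mod N) 1 + ez N z'"
  proof (rule poly_mapping_eqI)
    fix v
    have "lkp (ez N z) v = load N z' v + load N (\<lambda>t. if t = i then 1 else 0) v"
      by (subst zz) (simp add: lookup_ez load_add)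
    then show "lkp (ez N z) v = lkp (sng i 1 + sng (Suc i mod N) 1 + ez N z') v"
      using i by (simp add: load_delta lookup_add lookup_single when_def lookup_ez)
  qed
  have "var i * var (Suc i mod N) \<in> (G1 N :: 'k mpoly set)" unfolding G1_def using i by blast
  moreover have "prod_list ((var i * var (Suc i mod N)) # xs) = (sng (ez N z) 1 :: 'k mpoly)"
    using xs(3) by (simp add: var_mult mult_single ez)
  ultimately show ?case using xs by (intro exI[of _ "(var i * var (Suc i mod N)) # xs"]) auto
qed


lemma R_prod_list: "set xs \<subseteq> polyring N \<Longrightarrow> prod_list xs \<in> polyring N"
  by (induction xs) (auto intro: R_1 R_mult)

lemma ideal_gen_R: "ideal_gen (polyring N) G \<subseteq> polyring N" if "G \<subseteq> polyring N"
  using ideal_gen_least[OF ideal_R that] .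

lemma pow_eq:
  assumes N: "2 \<le> N"
  shows "ideal_pow (polyring N) (ideal_gen (polyring N) (G1 N)) k = (Sk N k :: 'k::field mpoly set)"
proof
  let ?R = "polyring N :: 'k mpoly set"
  let ?I = "ideal_gen ?R (G1 N)"
  have IS: "?I \<subseteq> Sk N 1" by (rule ideal_gen_least[OF Sk_ideal G1_Sk])
  have IR: "?I \<subseteq> ?R" by (rule ideal_gen_R[OF G1_R])
  show "ideal_pow ?R ?I k \<subseteq> Sk N k"
    unfolding ideal_pow_def
  proof (rule ideal_gen_least[OF Sk_ideal])
    show "{prod_list xs |xs. length xs = k \<and> set xs \<subseteq> ?I} \<subseteq> Sk N k"
      using IS prod_list_Sk by fastforce
  qed
  let ?Gs = "{prod_list xs |xs. length xs = k \<and> set xs \<subseteq> ?I}"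
  have GsR: "?Gs \<subseteq> ?R" using IR R_prod_list by fastforce
  have J: "is_ideal ?R (ideal_pow ?R ?I k)"
    unfolding ideal_pow_def by (rule ideal_gen_ideal[OF GsR ideal_R])
  show "Sk N k \<subseteq> ideal_pow ?R ?I k"
  proof
    fix p :: "'k mpoly" assume p: "p \<in> Sk N k"
    have "sng a (lkp p a) \<in> ideal_pow ?R ?I k" if a: "a \<in> kys p" for a
    proof -
      have aM: "a \<in> Mk N k" and ka: "kys a \<subseteq> {..<N}" using p a unfolding Sk_def polyring_def by auto
      obtain z where z: "sum z {..<N} = k" "\<And>v. v < N \<Longrightarrow> load N z v \<le> lkp a v"
        using aM unfolding Mk_def by auto
      obtain xs where xs: "length xs = k" "set xs \<subseteq> (G1 N :: 'k mpoly set)" "prod_list xs = sng (ez N z) 1"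
        using gens_exist[OF N z(1)] by blast
      define d where "d = a - ez N z"
      have ad: "a = d + ez N z"
      proof (rule poly_mapping_eqI)
        fix v
        have "load N z v \<le> lkp a v" using z(2) load_ge[of N v] by (cases "v < N") auto
        then show "lkp a v = lkp (d + ez N z) v"
          by (simp add: d_def lookup_add minus_poly_mapping.rep_eq lookup_ez)
      qed
      have "kys d \<subseteq> kys a" by (auto simp: d_def in_keys_iff minus_poly_mapping.rep_eq)
      then have dR: "sng d (lkp p a) \<in> ?R" using ka by (intro R_single) auto
      have "set xs \<subseteq> ?I" using xs(2) ideal_gen_sub[of "G1 N" ?R] by blast
      then have "prod_list xs \<in> ideal_pow ?R ?I k" unfolding ideal_pow_def using xs(1)
        by (intro subsetD[OF ideal_gen_sub]) blast
      then have "sng d (lkp p a) * prod_list xs \<in> ideal_pow ?R ?I k" by (rule ideal_mult[OF J dR])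
      moreover have "sng d (lkp p a) * prod_list xs = sng a (lkp p a)"
        using xs(3) ad by (simp add: mult_single)
      ultimately show ?thesis by simp
    qed
    then have "(\<Sum>a\<in>kys p. sng a (lkp p a)) \<in> ideal_pow ?R ?I k" by (intro ideal_sum[OF J]) auto
    then show "p \<in> ideal_pow ?R ?I k" using poly_decomp[of p] by simp
  qed
qed

lemma cycle_eq: "cycle_edge_ideal n = (ideal_gen (polyring (2*n+1)) (G1 (2*n+1)) :: 'k::field mpoly set)"
  unfolding cycle_edge_ideal_def G1_def by simp

section \<open>Associated primes: witnesses\<close>

lemma Ass_witness:
  assumes C: "C \<subseteq> {..<N}" and ka: "kys a \<subseteq> {..<N}"
    and w: "\<And>b. b + a \<in> Mk N m \<longleftrightarrow> (\<exists>i\<in>C. 0 < lkp b i)"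
  shows "(PC N C :: 'k::field mpoly set) \<in> Ass (polyring N) (Sk N m)"
  unfolding Ass_def
proof (intro CollectI conjI bexI)
  show "is_prime_ideal (polyring N) (PC N C :: 'k mpoly set)" by (rule PC_prime[OF C])
  show "sng a 1 \<in> (polyring N :: 'k mpoly set)" by (rule R_single[OF ka])
  show "(PC N C :: 'k mpoly set) = {g \<in> polyring N. g * sng a 1 \<in> Sk N m}"
  proof (intro set_eqI iffI)
    fix g :: "'k mpoly"
    assume g: "g \<in> PC N C"
    then have gR: "g \<in> polyring N" unfolding PC_def by auto
    have "g * sng a 1 \<in> Sk N m" unfolding Sk_def
      using g w R_mult[OF gR R_single[OF ka]] by (auto simp: keys_mult_mono PC_def)
    then show "g \<in> {g \<in> polyring N. g * sng a 1 \<in> Sk N m}" using gR by simp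
  next
    fix g :: "'k mpoly"
    assume "g \<in> {g \<in> polyring N. g * sng a 1 \<in> Sk N m}"
    then show "g \<in> PC N C" using w by (auto simp: keys_mult_mono PC_def Sk_def)
  qed
qed

lemma Suc_mod_neq: "2 \<le> N \<Longrightarrow> i < N \<Longrightarrow> Suc i mod N \<noteq> i"
  by (cases "Suc i = N") auto

lemma neighbor:
  assumes N: "2 \<le> N" and C: "min_cover N C" and c: "c \<in> C"
  shows "\<exists>t c'. t < N \<and> c' < N \<and> c' \<notin> C \<and> ((t = c \<and> Suc t mod N = c') \<or> (t = c' \<and> Suc t mod N = c))"
proof -
  have cov: "is_cover N C" and mn: "\<And>D. is_cover N D \<Longrightarrow> D \<subseteq> C \<Longrightarrow> D = C"
    using C unfolding min_cover_def by auto
  have CN: "C \<subseteq> {..<N}" using cov unfolding is_cover_def by auto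
  have "\<not> is_cover N (C - {c})" using mn[of "C - {c}"] c by auto
  then obtain t where t: "t < N" "t \<notin> C - {c}" "Suc t mod N \<notin> C - {c}" using CN unfolding is_cover_def by auto
  have tc: "t \<in> C \<or> Suc t mod N \<in> C" using cov t(1) unfolding is_cover_def by auto
  have sN: "Suc t mod N < N" using t(1) by simp
  have ne: "Suc t mod N \<noteq> t" using Suc_mod_neq[OF N t(1)] .
  show ?thesis
  proof (cases "t = c")
    case True
    then have "Suc t mod N \<notin> C" using t(3) ne by auto
    then show ?thesis using True t(1) sN by blast
  next
    case False
    then have "t \<notin> C" using t(2) by auto
    then have "Suc t mod N = c" using tc t(3) by auto
    then show ?thesis using t(1) \<open>t \<notin> C\<close> by blast
  qed
qed

lemma load_edge:
  assumes "t < N" "(t = c \<and> Suc t mod N = c') \<or> (t = c' \<and> Suc t mod N = c)"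
  shows "load N (\<lambda>s. if s = t then x else 0) v = (if v = c then x else 0) + (if v = c' then x else 0)"
  using assms load_delta[of t N x v] by auto

lemma witness_B:
  assumes N: "2 \<le> N" and C: "min_cover N C" and m: "1 \<le> m"
  shows "\<exists>a. kys a \<subseteq> {..<N} \<and> (\<forall>b. b + a \<in> Mk N m \<longleftrightarrow> (\<exists>i\<in>C. 0 < lkp b i))"
proof -
  have cov: "is_cover N C" using C unfolding min_cover_def by auto
  have CN: "C \<subseteq> {..<N}" using cov unfolding is_cover_def by auto
  have finC: "finite C" using CN finite_subset by blast
  have "0 < N" using N by simp
  then obtain c0 where c0: "c0 \<in> C" using cov unfolding is_cover_def by blast
  have c0N: "c0 < N" using c0 CN by auto
  define a where "a = (\<Sum>v\<in>{..<N} - C. sng v m) + sng c0 (m - 1)"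
  have la: "lkp a v = (if v < N \<and> v \<notin> C then m else 0) + (if v = c0 then m - 1 else 0)" for v
    unfolding a_def by (simp add: lookup_add lookup_sum_single[where g = id, simplified] lookup_single when_def sum.delta)
  have ka: "kys a \<subseteq> {..<N}" using c0N by (auto simp: in_keys_iff la split: if_splits)
  have sa: "sum (lkp a) C = m - 1"
  proof -
    have "sum (lkp a) C = (\<Sum>v\<in>C. if v = c0 then m - 1 else 0)" using CN by (intro sum.cong) (auto simp: la)
    also have "\<dots> = m - 1" using finC c0 by (simp add: sum.delta)
    finally show ?thesis .
  qed
  have key: "a + sng i 1 \<in> Mk N m" if i: "i \<in> C" for i
  proof -
    obtain t0 c0' where t0: "t0 < N" "c0' < N" "c0' \<notin> C" "(t0 = c0 \<and> Suc t0 mod N = c0') \<or> (t0 = c0' \<and> Suc t0 mod N = c0)"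
      using neighbor[OF N C c0] by blast
    obtain ti i' where ti: "ti < N" "i' < N" "i' \<notin> C" "(ti = i \<and> Suc ti mod N = i') \<or> (ti = i' \<and> Suc ti mod N = i)"
      using neighbor[OF N C i] by blast
    define z where "z s = (if s = t0 then m - 1 else 0) + (if s = ti then 1 else 0)" for s
    have sz: "sum z {..<N} = m" unfolding z_def using t0(1) ti(1) m by (simp add: sum.distrib sum.delta)
    have "load N z v \<le> lkp (a + sng i 1) v" if v: "v < N" for v
    proof -
      have "load N z v = ((if v = c0 then m - 1 else 0) + (if v = c0' then m - 1 else 0))
          + ((if v = i then 1 else 0) + (if v = i' then 1 else 0))"
        unfolding z_def using load_add[of N "\<lambda>s. if s = t0 then m - 1 else 0" "\<lambda>s. if s = ti then 1 else 0" v]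
          load_edge[OF t0(1) t0(4), of "m - 1" v] load_edge[OF ti(1) ti(4), of 1 v] by simp
      then show ?thesis using v c0 i t0(3) ti(3) m by (auto simp: lookup_add la lookup_single when_def)
    qed
    then show ?thesis unfolding Mk_def using sz by blast
  qed
  have "b + a \<in> Mk N m \<longleftrightarrow> (\<exists>i\<in>C. 0 < lkp b i)" for b
  proof
    assume ba: "b + a \<in> Mk N m"
    show "\<exists>i\<in>C. 0 < lkp b i"
    proof (rule ccontr)
      assume "\<not> (\<exists>i\<in>C. 0 < lkp b i)"
      then have "sum (lkp (b + a)) C = sum (lkp a) C" by (intro sum.cong) (auto simp: lookup_add)
      then show False using cover_bound[OF cov ba] sa m by simp
    qed
  next
    assume "\<exists>i\<in>C. 0 < lkp b i"
    then obtain i where i: "i \<in> C" "0 < lkp b i" by blast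
    show "b + a \<in> Mk N m"
      by (rule Mk_up[OF key[OF i(1)]]) (use i(2) in \<open>auto simp: lookup_add lookup_single when_def\<close>)
  qed
  then show ?thesis using ka by blast
qed


lemma sum_even: "(\<Sum>t<2*n+1. (if even t then 1 else 0 :: nat)) = n + 1"
proof (induction n)
  case 0 then show ?case by simp
next
  case (Suc n)
  have "{..<2 * Suc n + 1} = insert (2*n+2) (insert (2*n+1) {..<2*n+1})" by auto
  then show ?case using Suc by simp
qed

lemma witness_C:
  assumes N: "N = 2*n+1" and n: "1 \<le> n" and m: "n + 1 \<le> m"
  shows "\<exists>a. kys a \<subseteq> {..<N} \<and> (\<forall>b. b + a \<in> Mk N m \<longleftrightarrow> (\<exists>i\<in>{..<N}. 0 < lkp b i))"
proof -
  have N3: "3 \<le> N" and N2: "2 \<le> N" using N n by auto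
  define r where "r = m - n - 1"
  define a where "a = (\<Sum>v<N. sng v (1::nat)) + sng 0 r + sng 1 r"
  have la: "lkp a v = (if v < N then 1 else 0) + (if v = 0 then r else 0) + (if v = 1 then r else 0)" for v
    unfolding a_def by (simp add: lookup_add lookup_sum_single[where g = id, simplified] lookup_single when_def sum.delta)
  have ka: "kys a \<subseteq> {..<N}" using N3 by (auto simp: in_keys_iff la split: if_splits)
  have sa: "(\<Sum>v<N. lkp a v) = N + 2 * r"
  proof -
    have "(\<Sum>v<N. lkp a v) = (\<Sum>v<N. (1::nat) + ((if v = 0 then r else 0) + (if v = 1 then r else 0)))"
      by (intro sum.cong) (auto simp: la)
    also have "\<dots> = (\<Sum>v<N. (1::nat)) + ((\<Sum>v<N. if v = 0 then r else 0) + (\<Sum>v<N. if v = 1 then r else 0))"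
      by (simp only: sum.distrib)
    also have "\<dots> = N + 2 * r" using N3 by (simp only: sum.delta finite_lessThan) simp
    finally show ?thesis .
  qed
  define z0 where "z0 t = (if even t then 1 else 0 :: nat)" for t :: nat
  have sz0: "sum z0 {..<N} = n + 1" unfolding z0_def N by (rule sum_even)
  have lz0: "load N z0 u = 1 + (if u = 0 then 1 else 0)" if u: "u < N" for u
  proof (cases "u = 0")
    case True
    have "even (N - 1)" using N by simp
    then show ?thesis using True u by (simp add: load_eq prv_def z0_def)
  next
    case False
    then show ?thesis using u by (cases "even u") (auto simp: load_eq prv_def z0_def)
  qed
  have key: "a + sng i 1 \<in> Mk N m" if i: "i < N" for i
  proof -
    define zi where "zi t = z0 (rot N (N - i) t)" for t
    have "sum zi {..<N} = sum z0 (rot N (N - i) ` {..<N})"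
      unfolding zi_def using inj_rot[of "N - i" N] by (simp add: sum.reindex)
    also have "\<dots> = n + 1" using rot_image[of "N - i" N] sz0 by simp
    finally have szi: "sum zi {..<N} = n + 1" .
    have lzi: "load N zi v = 1 + (if v = i then 1 else 0)" if v: "v < N" for v
    proof -
      have "load N zi v = z0 (rot N (N - i) v) + z0 (prv N (rot N (N - i) v))"
        using v prv_lt rot_prv by (simp add: load_eq zi_def)
      also have "\<dots> = load N z0 (rot N (N - i) v)" using v rot_lt by (simp add: load_eq)
      also have "\<dots> = 1 + (if rot N (N - i) v = 0 then 1 else 0)" using lz0 v rot_lt by blast
      also have "(rot N (N - i) v = 0) = (v = i)"
      proof
        assume h: "rot N (N - i) v = 0"
        have "v = rot N i (rot N (N - i) v)" using rot_inv2[of i N v] i v by simp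
        then show "v = i" using h i by (simp add: rot_def)
      next
        assume "v = i" then show "rot N (N - i) v = 0" using i by (simp add: rot_def)
      qed
      finally show ?thesis .
    qed
    define z where "z t = (if t = 0 then r else 0) + zi t" for t
    have sz: "sum z {..<N} = m" unfolding z_def using szi N3 m by (simp add: sum.distrib sum.delta r_def)
    have "load N z v \<le> lkp (a + sng i 1) v" if v: "v < N" for v
    proof -
      have "Suc 0 mod N = 1" using N3 by simp
      then have "load N z v = (if v = 0 then r else 0) + (if v = 1 then r else 0) + (1 + (if v = i then 1 else 0))"
        unfolding z_def using load_add[of N "\<lambda>t. if t = 0 then r else 0" zi v] load_delta[of 0 N r v] lzi[OF v] N3
        by simp
      then show ?thesis using v by (simp add: lookup_add la lookup_single when_def)
    qed
    then show ?thesis unfolding Mk_def using sz by blast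
  qed
  have "b + a \<in> Mk N m \<longleftrightarrow> (\<exists>i\<in>{..<N}. 0 < lkp b i)" for b
  proof
    assume ba: "b + a \<in> Mk N m"
    show "\<exists>i\<in>{..<N}. 0 < lkp b i"
    proof (rule ccontr)
      assume "\<not> (\<exists>i\<in>{..<N}. 0 < lkp b i)"
      then have "(\<Sum>v<N. lkp (b + a) v) = (\<Sum>v<N. lkp a v)" by (intro sum.cong) (auto simp: lookup_add)
      then show False using degree_bound[OF ba] sa N m by (simp add: r_def)
    qed
  next
    assume "\<exists>i\<in>{..<N}. 0 < lkp b i"
    then obtain i where i: "i < N" "0 < lkp b i" by blast
    show "b + a \<in> Mk N m"
      by (rule Mk_up[OF key[OF i(1)]]) (use i(2) in \<open>auto simp: lookup_add lookup_single when_def\<close>)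
  qed
  then show ?thesis using ka by blast
qed


section \<open>Associated primes of powers\<close>

lemma prime_one:
  assumes "is_prime_ideal (polyring N) P" shows "(1::'k::field mpoly) \<notin> P"
proof
  assume one: "1 \<in> P"
  have "is_ideal (polyring N) P" "P \<noteq> polyring N" using assms unfolding is_prime_ideal_def by auto
  moreover have "polyring N \<subseteq> P"
  proof
    fix r :: "'k mpoly" assume "r \<in> polyring N"
    then show "r \<in> P" using ideal_mult[OF \<open>is_ideal (polyring N) P\<close> _ one] by fastforce
  qed
  ultimately show False using ideal_sub by blast
qed

lemma prime_pow:
  assumes P: "is_prime_ideal (polyring N) P" and x: "(x::'k::field mpoly) \<in> polyring N"
  shows "1 \<le> k \<Longrightarrow> x ^ k \<in> P \<Longrightarrow> x \<in> P"
proof (induction k)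
  case 0 then show ?case by simp
next
  case (Suc k)
  show ?case
  proof (cases "k = 0")
    case True then show ?thesis using Suc by simp
  next
    case False
    have "x * x ^ k \<in> P" using Suc by simp
    then have "x \<in> P \<or> x ^ k \<in> P" using P x R_power[OF x] unfolding is_prime_ideal_def by blast
    then show ?thesis using Suc False by auto
  qed
qed

lemma prime_prod:
  assumes P: "is_prime_ideal (polyring N) P"
  shows "finite A \<Longrightarrow> (\<And>i. i \<in> A \<Longrightarrow> g i \<in> polyring N \<and> g i \<notin> P) \<Longrightarrow>
    prod g A \<in> polyring N \<and> (prod g A :: 'k::field mpoly) \<notin> P"
proof (induction A rule: finite_induct)
  case empty then show ?case using prime_one[OF P] R_1 by simp
next
  case (insert x A)
  then have gx: "g x \<in> polyring N" "g x \<notin> P" and pA: "prod g A \<in> polyring N" "prod g A \<notin> P" by auto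
  have "g x * prod g A \<notin> P" using P gx pA unfolding is_prime_ideal_def by blast
  then show ?case using insert(1,2) gx pA R_mult by simp
qed

lemma var_pow: "(var j :: 'k::field mpoly) ^ k = sng (sng j k) 1"
proof (induction k)
  case 0 then show ?case by simp
next
  case (Suc k)
  have "(var j :: 'k mpoly) ^ Suc k = sng (sng j 1 + sng j k) 1" using Suc by (simp add: var_def mult_single)
  also have "sng j 1 + sng j k = sng j (Suc k)" by (simp add: single_add[symmetric])
  finally show ?case .
qed

lemma prod_var_pow: "finite A \<Longrightarrow> (\<Prod>i\<in>A. (var i :: 'k::field mpoly) ^ k) = sng (\<Sum>i\<in>A. sng i k) 1"
  by (induction A rule: finite_induct) (auto simp: var_pow mult_single)

lemma Sk_pow: "p \<in> (Sk N 1 :: 'k::field mpoly set) \<Longrightarrow> p ^ k \<in> Sk N k"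
proof (induction k)
  case 0 then show ?case unfolding Sk_def by (auto intro: R_1 Mk_0)
next
  case (Suc k) then show ?case using Sk_mult[of p N 1 "p ^ k" k] by simp
qed

lemma zero_mono: "kys (x::nat \<Rightarrow>\<^sub>0 nat) \<subseteq> {..<N} \<Longrightarrow> (\<forall>i<N. lkp x i = 0) \<Longrightarrow> x = 0"
  by (rule poly_mapping_eqI) (auto simp: in_keys_iff)

lemma thmA:
  fixes P :: "'k::field mpoly set"
  assumes N: "2 \<le> N" and k: "1 \<le> k" and PA: "P \<in> Ass (polyring N) (Sk N k)"
  shows "P = PC N {..<N} \<or> (\<exists>C. min_cover N C \<and> P = PC N C)"
proof -
  let ?R = "polyring N :: 'k mpoly set"
  obtain f where prime: "is_prime_ideal ?R P" and f: "f \<in> ?R" and Pf: "P = {g\<in>?R. g * f \<in> Sk N k}"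
    using PA unfolding Ass_def by auto
  have Pid: "is_ideal ?R P" using prime unfolding is_prime_ideal_def by auto
  have PR: "P \<subseteq> ?R" using ideal_sub[OF Pid] .
  have primeD: "\<And>a b. a \<in> ?R \<Longrightarrow> b \<in> ?R \<Longrightarrow> a * b \<in> P \<Longrightarrow> a \<in> P \<or> b \<in> P"
    using prime unfolding is_prime_ideal_def by blast
  define S where "S = {i. i < N \<and> (var i :: 'k mpoly) \<in> P}"
  have covS: "is_cover N S"
    unfolding is_cover_def
  proof (intro conjI allI impI)
    show "S \<subseteq> {..<N}" unfolding S_def by auto
    fix i assume i: "i < N"
    define e where "e = (var i * var (Suc i mod N) :: 'k mpoly)"
    have eG: "e \<in> G1 N" unfolding e_def G1_def using i by blast
    have eR: "e \<in> ?R" using eG G1_R by blast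
    have "e ^ k \<in> Sk N k" using Sk_pow G1_Sk eG by blast
    then have "f * e ^ k \<in> Sk N k" by (rule ideal_mult[OF Sk_ideal f])
    then have "e ^ k \<in> P" unfolding Pf using R_power[OF eR] by (simp add: mult.commute)
    then have "e \<in> P" using prime_pow[OF prime eR k] by blast
    moreover have "Suc i mod N < N" using i by simp
    ultimately have "var i \<in> P \<or> var (Suc i mod N) \<in> P" using primeD R_var i unfolding e_def by blast
    then show "i \<in> S \<or> Suc i mod N \<in> S" unfolding S_def using i \<open>Suc i mod N < N\<close> by auto
  qed
  show ?thesis
  proof (cases "S = {..<N}")
    case True
    have sub1: "PC N {..<N} \<subseteq> P" by (rule PC_least[OF Pid]) (use True in \<open>auto simp: S_def\<close>)
    have "P \<subseteq> PC N {..<N}"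
    proof
      fix h assume h: "h \<in> P"
      show "h \<in> PC N {..<N}"
      proof (rule ccontr)
        assume nh: "h \<notin> PC N {..<N}"
        have hR: "h \<in> ?R" using h PR by blast
        then obtain x where x: "x \<in> kys h" "\<forall>i<N. lkp x i = 0" using nh unfolding PC_def by auto
        have "kys x \<subseteq> {..<N}" using hR x(1) unfolding polyring_def by auto
        then have x0: "x = 0" using zero_mono x(2) by blast
        define c where "c = lkp h 0"
        have c: "c \<noteq> 0" using x x0 by (simp add: c_def in_keys_iff)
        define h' where "h' = h - sng 0 c"
        have lh': "lkp h' y = (if y = 0 then 0 else lkp h y)" for y
          by (simp add: h'_def lookup_minus lookup_single when_def c_def)
        have h'R: "h' \<in> ?R" unfolding h'_def using R_add[OF hR R_uminus[OF R_single[of 0 N c]]] by simp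
        have "h' \<in> PC N {..<N}"
          unfolding PC_def
        proof (intro CollectI conjI ballI h'R)
          fix y assume y: "y \<in> kys h'"
          then have "lkp h' y \<noteq> 0" by (simp add: in_keys_iff)
          then have "y \<noteq> 0" "y \<in> kys h" using lh'[of y] by (cases "y = 0"; simp add: in_keys_iff)+
          moreover have "kys y \<subseteq> {..<N}" using hR \<open>y \<in> kys h\<close> unfolding polyring_def by auto
          ultimately show "\<exists>i\<in>{..<N}. 0 < lkp y i"
          proof -
            assume y0: "y \<noteq> 0" "y \<in> kys h" "kys y \<subseteq> {..<N}"
            show ?thesis
            proof (rule ccontr)
              assume "\<not> (\<exists>i\<in>{..<N}. 0 < lkp y i)"
              then have "\<forall>i<N. lkp y i = 0" by auto
              then show False using zero_mono[OF y0(3)] y0(1) by blast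
            qed
          qed
        qed
        then have "h' \<in> P" using sub1 by blast
        then have "h - h' \<in> P" using ideal_diff[OF Pid h] by blast
        moreover have "h - h' = sng 0 c" unfolding h'_def by simp
        ultimately have s0: "sng 0 c \<in> P" by simp
        have r1: "sng 0 (1 / c) \<in> ?R" by (rule R_single) simp
        have "sng 0 (1 / c) * sng 0 c \<in> P" by (rule ideal_mult[OF Pid r1 s0])
        then have "(1::'k mpoly) \<in> P" using c by (simp add: mult_single)
        then show False using prime_one[OF prime] by blast
      qed
    qed
    then show ?thesis using sub1 by auto
  next
    case False
    then obtain j where j: "j < N" "(var j :: 'k mpoly) \<notin> P" using covS unfolding S_def is_cover_def by auto
    define e where "e = sng j k"
    define F where "F = f * sng e (1::'k)"
    have vjk: "(var j :: 'k mpoly) ^ k = sng e 1" unfolding e_def by (rule var_pow)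
    have vR: "(var j :: 'k mpoly) ^ k \<in> ?R" using R_power R_var j(1) by blast
    have FR: "F \<in> ?R" unfolding F_def using R_mult[OF f] vR vjk by simp
    have Pchar: "h \<in> P \<longleftrightarrow> h * F \<in> Sk N k" if hR: "h \<in> ?R" for h
    proof
      assume "h \<in> P"
      then have "var j ^ k * h \<in> P" using ideal_mult[OF Pid vR] by blast
      then have "(var j ^ k * h) * f \<in> Sk N k" unfolding Pf by blast
      then show "h * F \<in> Sk N k" unfolding F_def vjk by (simp add: ac_simps)
    next
      assume "h * F \<in> Sk N k"
      then have "(h * var j ^ k) * f \<in> Sk N k" unfolding F_def vjk by (simp add: ac_simps)
      then have "h * var j ^ k \<in> P" unfolding Pf using R_mult[OF hR vR] by blast
      then have "h \<in> P \<or> var j ^ k \<in> P" using primeD[OF hR vR] by blast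
      then show "h \<in> P" using prime_pow[OF prime R_var[OF j(1)] k] j(2) by blast
    qed
    have keyF: "k \<le> lkp c j" if "c \<in> kys F" for c
      using that unfolding F_def keys_mult_mono e_def by (auto simp: lookup_add)
    define T where "T = {C. min_cover N C \<and> j \<notin> C \<and> (\<exists>c\<in>kys F. degC C c < k)}"
    have "\<exists>C\<in>T. C \<subseteq> S"
    proof (rule ccontr)
      assume "\<not> (\<exists>C\<in>T. C \<subseteq> S)"
      then have hT: "\<And>C. C \<in> T \<Longrightarrow> \<exists>u\<in>C. u \<notin> S" by blast
      define A where "A = {..<N} - S"
      define d where "d = (\<Sum>i\<in>A. sng i k)"
      have ld: "lkp d u = (if u \<in> A then k else 0)" for u
        unfolding d_def by (simp add: lookup_sum_single[where g = id, simplified] sum.delta A_def)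
      define u where "u = (sng d 1 :: 'k mpoly)"
      have "u = (\<Prod>i\<in>A. (var i :: 'k mpoly) ^ k)" unfolding u_def d_def A_def by (simp add: prod_var_pow)
      moreover have "(\<Prod>i\<in>A. (var i :: 'k mpoly) ^ k) \<in> ?R \<and> (\<Prod>i\<in>A. (var i :: 'k mpoly) ^ k) \<notin> P"
      proof (rule prime_prod[OF prime])
        show "finite A" unfolding A_def by simp
        fix i assume i: "i \<in> A"
        then have "i < N" "var i \<notin> P" unfolding A_def S_def by auto
        then show "(var i :: 'k mpoly) ^ k \<in> ?R \<and> var i ^ k \<notin> P"
          using R_power R_var prime_pow[OF prime R_var[OF \<open>i < N\<close>] k] by blast
      qed
      ultimately have uR: "u \<in> ?R" and uP: "u \<notin> P" by auto
      have "u * F \<in> Sk N k"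
        unfolding Sk_def
      proof (intro CollectI conjI ballI)
        show "u * F \<in> ?R" using R_mult[OF uR FR] .
        fix c' assume "c' \<in> kys (u * F)"
        then obtain c where c: "c \<in> kys F" "c' = c + d" unfolding u_def by (auto simp: mult.commute[of "sng d 1"] keys_mult_mono)
        show "c' \<in> Mk N k" unfolding c(2)
        proof (rule konig_Mk[OF N j(1)])
          show "k \<le> lkp (c + d) j" using keyF[OF c(1)] by (simp add: lookup_add)
          fix C assume C: "min_cover N C" "j \<notin> C"
          have CN: "C \<subseteq> {..<N}" using C(1) unfolding min_cover_def is_cover_def by auto
          then have finC: "finite C" using finite_subset by blast
          show "k \<le> sum (lkp (c + d)) C"
          proof (cases "C \<in> T")
            case True
            then obtain u0 where u0: "u0 \<in> C" "u0 \<notin> S" using hT by blast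
            then have "u0 \<in> A" using CN unfolding A_def by auto
            then have "k \<le> lkp (c + d) u0" by (simp add: lookup_add ld)
            also have "\<dots> \<le> sum (lkp (c + d)) C" using finC u0(1) by (intro member_le_sum) auto
            finally show ?thesis .
          next
            case False
            then have "k \<le> degC C c" using C c(1) unfolding T_def by auto
            also have "\<dots> \<le> sum (lkp (c + d)) C" unfolding degC_def by (intro sum_mono) (simp add: lookup_add)
            finally show ?thesis .
          qed
        qed
      qed
      then have "u \<in> P" using Pchar[OF uR] by blast
      then show False using uP by blast
    qed
    then obtain C where C: "C \<in> T" "C \<subseteq> S" by blast
    have Cmin: "min_cover N C" using C(1) unfolding T_def by auto
    have covC: "is_cover N C" using Cmin unfolding min_cover_def by auto
    have CN: "C \<subseteq> {..<N}" using covC unfolding is_cover_def by auto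
    have finC: "finite C" using CN finite_subset by blast
    have sub1: "PC N C \<subseteq> P" by (rule PC_least[OF Pid CN]) (use C(2) in \<open>auto simp: S_def\<close>)
    have "P \<subseteq> PC N C"
    proof
      fix h assume h: "h \<in> P"
      show "h \<in> PC N C"
      proof (rule ccontr)
        assume nh: "h \<notin> PC N C"
        have hR: "h \<in> ?R" using h PR by blast
        have hv: "h \<noteq> 0" "vC C h = 0" using notin_PC[OF finC hR nh] by auto
        obtain c0 where c0: "c0 \<in> kys F" "degC C c0 < k" using C(1) unfolding T_def by auto
        then have "F \<noteq> 0" by auto
        then obtain c where c: "c \<in> kys (h * F)" "degC C c = vC C h + vC C F" using val_mult[OF hv(1)] by blast
        have "degC C c < k" using c(2) hv(2) vC_le[OF c0(1), of C] c0(2) by simp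
        moreover have "h * F \<in> Sk N k" using Pchar[OF hR] h by blast
        then have "c \<in> Mk N k" using c(1) unfolding Sk_def by auto
        then have "k \<le> degC C c" using cover_bound[OF covC] unfolding degC_def by blast
        ultimately show False by simp
      qed
    qed
    then show ?thesis using sub1 Cmin by blast
  qed
qed


theorem corollary4p6:
  fixes n :: nat
  assumes "n \<ge> 1"
  shows "nearly_copersistent (2*n+1) (cycle_edge_ideal n :: ('k::field) mpoly set)"
proof -
  define N where "N = 2*n+1"
  have N2: "2 \<le> N" using assms unfolding N_def by simp
  let ?R = "polyring N :: 'k mpoly set"
  have ce: "(cycle_edge_ideal n :: 'k mpoly set) = ideal_gen ?R (G1 N)"
    unfolding N_def by (rule cycle_eq)
  have pw: "ideal_pow ?R (cycle_edge_ideal n) m = Sk N m" for m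
    unfolding ce by (rule pow_eq[OF N2])
  let ?Pm = "PC N {..<N} :: 'k mpoly set"
  define M :: "'k mpoly set" where "M = {var i | i. i < N}"
  have MR: "M \<subseteq> ?R" unfolding M_def using R_var by blast
  have "?Pm = ideal_gen ?R M"
  proof
    show "?Pm \<subseteq> ideal_gen ?R M"
    proof (rule PC_least)
      show "is_ideal ?R (ideal_gen ?R M)" by (rule ideal_gen_ideal[OF MR ideal_R])
      show "{..<N} \<subseteq> {..<N}" by simp
      fix i assume "i \<in> {..<N}"
      then have "var i \<in> M" unfolding M_def by auto
      then show "var i \<in> ideal_gen ?R M" using ideal_gen_sub by blast
    qed
    show "ideal_gen ?R M \<subseteq> ?Pm"
    proof (rule ideal_gen_least[OF PC_ideal])
      show "M \<subseteq> ?Pm"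
      proof
        fix u assume "u \<in> M"
        then obtain i where i: "i < N" "u = var i" unfolding M_def by auto
        have "\<exists>ia\<in>{..<N}. 0 < lkp (sng i (1::nat)) ia" using i(1) by (intro bexI[of _ i]) auto
        then show "u \<in> ?Pm" using R_var[OF i(1)] i(2) unfolding PC_def var_def by auto
      qed
    qed
  qed
  moreover have "\<forall>u\<in>M. is_monomial N u"
    unfolding M_def is_monomial_def var_def
  proof (intro ballI, elim CollectE exE conjE)
    fix u i assume "u = (sng (sng i 1) 1 :: 'k mpoly)" "i < N"
    then show "\<exists>a. kys a \<subseteq> {..<N} \<and> u = sng a 1" by (intro exI[of _ "sng i 1"]) auto
  qed
  ultimately have mp: "monomial_prime N ?Pm"
    unfolding monomial_prime_def monomial_ideal_def using PC_prime[of "{..<N}" N] by blast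
  have B: "PC N C \<in> Ass ?R (Sk N m)" if C: "min_cover N C" and m: "1 \<le> m" for C m
  proof -
    obtain a where a: "kys a \<subseteq> {..<N}" "\<And>b. b + a \<in> Mk N m \<longleftrightarrow> (\<exists>i\<in>C. 0 < lkp b i)"
      using witness_B[OF N2 C m] by blast
    have "C \<subseteq> {..<N}" using C unfolding min_cover_def is_cover_def by auto
    then show ?thesis using Ass_witness a by blast
  qed
  have Cth: "?Pm \<in> Ass ?R (Sk N m)" if m: "n + 1 \<le> m" for m
  proof -
    obtain a where a: "kys a \<subseteq> {..<N}" "\<And>b. b + a \<in> Mk N m \<longleftrightarrow> (\<exists>i\<in>{..<N}. 0 < lkp b i)"
      using witness_C[OF N_def assms m] by blast
    then show ?thesis using Ass_witness[of "{..<N}" N a m] by blast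
  qed
  have A: "P = ?Pm \<or> (\<exists>C. min_cover N C \<and> P = PC N C)" if "P \<in> Ass ?R (Sk N k)" "1 \<le> k" for P k
    using thmA[OF N2 that(2) that(1)] .
  have part1: "Ass ?R (Sk N (m+1)) \<subseteq> Ass ?R (Sk N m) \<union> {?Pm}" if "1 \<le> m" for m
  proof
    fix P assume "P \<in> Ass ?R (Sk N (m+1))"
    then have "P = ?Pm \<or> (\<exists>C. min_cover N C \<and> P = PC N C)" using A by simp
    then show "P \<in> Ass ?R (Sk N m) \<union> {?Pm}" using B that by blast
  qed
  have part2: "Ass ?R (Sk N (m+1)) \<subseteq> Ass ?R (Sk N m)" if "n + 1 \<le> m" for m
  proof
    fix P assume "P \<in> Ass ?R (Sk N (m+1))"
    then have "P = ?Pm \<or> (\<exists>C. min_cover N C \<and> P = PC N C)" using A by simp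
    moreover have "1 \<le> m" using that assms by simp
    ultimately show "P \<in> Ass ?R (Sk N m)" using B Cth that by blast
  qed
  show ?thesis
    unfolding nearly_copersistent_def N_def[symmetric] pw
    using assms mp part1 part2 by (intro exI[of _ n] conjI exI[of _ ?Pm]) auto
qed

end
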